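(* Let $D,n,m,r\ge1$. For $0\le i<D$ let $M_i\in\mathbb{F}[x]^{r\times r}$ and $N_i\in\mathbb{F}[y]^{r\times r}$ have entries of degree $<n$, and let $f_i\in\mathbb{F}[x]$, $g_i\in\mathbb{F}[y]$ have degree $\le m$. Let $\omega\in\mathbb{F}$ have multiplicative order $\ge (Dnm)^2$. Let $\beta_0,\dots,\beta_{r^2-1}\in\mathbb{F}$ be distinct and let $p_0,\dots,p_{r^2-1}$ be the corresponding Lagrange interpolation polynomials. Then for all but fewer than $(Dnmr)^2$ values of $\alpha\in\mathbb{F}$, $$\mathrm{span}\Big\{\prod_{i=0}^{D-1}M_i(f_i(x))\cdot\prod_{i=0}^{D-1}N_i(g_i(y))\Big\}_{x,y\in\mathbb{F}}\subseteq\mathrm{span}\Big\{\prod_{i=0}^{D-1}M_i\Big(\sum_{\ell=0}^{r^2-1}f_i(\omega^\ell\alpha)p_\ell(z)\Big)\cdot\prod_{i=0}^{D-1}N_i\Big(\sum_{\ell=0}^{r^2-1}g_i((\omega^\ell\alpha)^{Dnm})p_\ell(z)\Big)\Big\}_{z\in\mathbb{F}}.$$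
   Context: Products $\prod_{i=0}^{D-1}$ of matrices are taken in increasing order of $i$ from left to right. Given $s$ and distinct $\beta_0,\dots,\beta_{s-1}\in\mathbb{F}$, the Lagrange interpolation polynomials are the unique $p_\ell\in\mathbb{F}[t]$ of degree $<s$ with $p_\ell(\beta_i)=1$ if $i=\ell$ and $0$ otherwise, for $i,\ell\in\{0,\dots,s-1\}$. Spans are $\mathbb{F}$-linear spans in $\mathbb{F}^{r\times r}$. *)

theory Defs
  imports "Jordan_Normal_Form.Matrix" "HOL-Computational_Algebra.Polynomial"
begin

definition eval_mat :: "'a::comm_semiring_1 poly mat \<Rightarrow> 'a \<Rightarrow> 'a mat" where
  "eval_mat P t = map_mat (\<lambda>q. poly q t) P"

definition prod_mats :: "nat \<Rightarrow> nat \<Rightarrow> (nat \<Rightarrow> 'a::semiring_1 mat) \<Rightarrow> 'a mat" where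
  "prod_mats r D A = foldl (\<lambda>acc i. acc * A i) (1\<^sub>m r) [0..<D]"

definition mat_span :: "nat \<Rightarrow> 'a::field mat set \<Rightarrow> 'a mat set" where
  "mat_span r X = {A. \<exists>k c B. (\<forall>j<k. B j \<in> X) \<and>
      A = foldr (\<lambda>j acc. c j \<cdot>\<^sub>m B j + acc) [0..<k] (0\<^sub>m r r)}"

end

theory Submission
  imports Defs "Jordan_Normal_Form.Determinant"
begin


lemma sum_lessThan_add: "(\<Sum>x<(k1::nat)+k2. (f x::'a::comm_monoid_add)) = (\<Sum>x<k1. f x) + (\<Sum>x<k2. f (k1+x))"
  by (induction k2) (auto simp: add.assoc)

definition lc :: "nat \<Rightarrow> (nat \<Rightarrow> 'a::comm_ring_1) \<Rightarrow> (nat \<Rightarrow> 'a mat) \<Rightarrow> nat set \<Rightarrow> 'a mat" where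
  "lc r c B I = mat r r (\<lambda>ij. \<Sum>i\<in>I. c i * B i $$ ij)"

lemma lc_carrier[simp]: "lc r c B I \<in> carrier_mat r r"
  unfolding lc_def by simp

lemma foldr_lc:
  "(\<forall>j<b. B j \<in> carrier_mat r r) \<Longrightarrow> z \<in> carrier_mat r r \<Longrightarrow>
   foldr (\<lambda>j acc. c j \<cdot>\<^sub>m B j + acc) [a..<b] z
     = mat r r (\<lambda>ij. (\<Sum>j\<in>{a..<b}. c j * B j $$ ij) + z $$ ij)"
proof (induction b arbitrary: z)
  case 0
  then show ?case by (auto intro!: eq_matI)
next
  case (Suc b)
  show ?case
  proof (cases "a \<le> b")
    case True
    have e: "[a..<Suc b] = [a..<b] @ [b]" using True by simp
    have zc: "c b \<cdot>\<^sub>m B b + z \<in> carrier_mat r r" using Suc.prems by auto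
    have "foldr (\<lambda>j acc. c j \<cdot>\<^sub>m B j + acc) [a..<Suc b] z
        = foldr (\<lambda>j acc. c j \<cdot>\<^sub>m B j + acc) [a..<b] (c b \<cdot>\<^sub>m B b + z)"
      unfolding e by simp
    also have "\<dots> = mat r r (\<lambda>ij. (\<Sum>j\<in>{a..<b}. c j * B j $$ ij) + (c b \<cdot>\<^sub>m B b + z) $$ ij)"
      using Suc.IH[OF _ zc] Suc.prems by auto
    also have "\<dots> = mat r r (\<lambda>ij. (\<Sum>j\<in>{a..<Suc b}. c j * B j $$ ij) + z $$ ij)"
    proof (rule eq_matI)
      fix p q assume pq: "p < dim_row (mat r r (\<lambda>ij. (\<Sum>j\<in>{a..<Suc b}. c j * B j $$ ij) + z $$ ij))"
         "q < dim_col (mat r r (\<lambda>ij. (\<Sum>j\<in>{a..<Suc b}. c j * B j $$ ij) + z $$ ij))"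
      have Bb: "B b \<in> carrier_mat r r" using Suc.prems by auto
      have s: "(\<Sum>x\<in>{a..<Suc b}. c x * B x $$ (p,q)) = (\<Sum>x\<in>{a..<b}. c x * B x $$ (p,q)) + c b * B b $$ (p,q)"
        by (subst sum.atLeastLessThan_Suc) (use True in auto)
      show "mat r r (\<lambda>ij. (\<Sum>j\<in>{a..<b}. c j * B j $$ ij) + (c b \<cdot>\<^sub>m B b + z) $$ ij) $$ (p, q) =
         mat r r (\<lambda>ij. (\<Sum>j\<in>{a..<Suc b}. c j * B j $$ ij) + z $$ ij) $$ (p, q)"
        using pq carrier_matD[OF Bb] Suc.prems(2) True by (simp add: s algebra_simps not_less)
    qed auto
    finally show ?thesis .
  next
    case False
    then show ?thesis using Suc.prems by (auto intro!: eq_matI)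
  qed
qed

lemma mat_span_iff:
  assumes "X \<subseteq> carrier_mat r r"
  shows "A \<in> mat_span r X \<longleftrightarrow> (\<exists>k c B. (\<forall>j<k. B j \<in> X) \<and> A = lc r c B {..<k})"
proof -
  have *: "foldr (\<lambda>j acc. c j \<cdot>\<^sub>m B j + acc) [0..<k] (0\<^sub>m r r) = lc r c B {..<k}"
    if "\<forall>j<k. B j \<in> X" for k c B
  proof -
    have "\<forall>j<k. B j \<in> carrier_mat r r" using that assms by auto
    from foldr_lc[OF this, of "0\<^sub>m r r" c 0] show ?thesis
      unfolding lc_def by (auto intro!: eq_matI simp: atLeast0LessThan)
  qed
  show ?thesis
  proof
    assume "A \<in> mat_span r X"
    then obtain k c B where "\<forall>j<k. B j \<in> X" "A = foldr (\<lambda>j acc. c j \<cdot>\<^sub>m B j + acc) [0..<k] (0\<^sub>m r r)"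
      unfolding mat_span_def by blast
    then show "\<exists>k c B. (\<forall>j<k. B j \<in> X) \<and> A = lc r c B {..<k}" using * by metis
  next
    assume "\<exists>k c B. (\<forall>j<k. B j \<in> X) \<and> A = lc r c B {..<k}"
    then obtain k c B where kB: "\<forall>j<k. B j \<in> X" "A = lc r c B {..<k}" by blast
    then have "A = foldr (\<lambda>j acc. c j \<cdot>\<^sub>m B j + acc) [0..<k] (0\<^sub>m r r)" using *[OF kB(1)] by simp
    then show "A \<in> mat_span r X" unfolding mat_span_def using kB(1) by blast
  qed
qed

lemma mat_span_carrier: "X \<subseteq> carrier_mat r r \<Longrightarrow> A \<in> mat_span r X \<Longrightarrow> A \<in> carrier_mat r r"
proof -
  assume X: "X \<subseteq> carrier_mat r r" and A: "A \<in> mat_span r X"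
  then obtain k c B where "A = lc r c B {..<k}" using mat_span_iff[OF X] by blast
  then show ?thesis by simp
qed

lemma mat_span_zero: "0\<^sub>m r r \<in> mat_span r X"
  unfolding mat_span_def by (rule CollectI, rule exI[of _ 0], auto)

lemma mat_span_mono: "X \<subseteq> Y \<Longrightarrow> mat_span r X \<subseteq> mat_span r Y"
  unfolding mat_span_def by blast

lemma mat_span_gen: assumes "X \<subseteq> carrier_mat r r" "x \<in> X" shows "x \<in> mat_span r X"
proof -
  have xc: "x \<in> carrier_mat r r" using assms by auto
  have "x = lc r (\<lambda>_. 1) (\<lambda>_. x) {..<Suc 0}" unfolding lc_def by (rule eq_matI) (use xc in simp_all)
  then show ?thesis unfolding mat_span_iff[OF assms(1)] using assms(2)
    by (intro exI[of _ "Suc 0"] exI[of _ "\<lambda>_. 1"] exI[of _ "\<lambda>_. x"]) auto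
qed

lemma mat_span_add:
  assumes X: "X \<subseteq> carrier_mat r r" and A: "A \<in> mat_span r X" and B: "B \<in> mat_span r X"
  shows "A + B \<in> mat_span r X"
proof -
  obtain k1 c1 B1 where 1: "\<forall>j<k1. B1 j \<in> X" "A = lc r c1 B1 {..<k1}" using A unfolding mat_span_iff[OF X] by blast
  obtain k2 c2 B2 where 2: "\<forall>j<k2. B2 j \<in> X" "B = lc r c2 B2 {..<k2}" using B unfolding mat_span_iff[OF X] by blast
  define c where "c j = (if j < k1 then c1 j else c2 (j - k1))" for j
  define BB where "BB j = (if j < k1 then B1 j else B2 (j - k1))" for j
  have "\<forall>j<k1+k2. BB j \<in> X" using 1 2 unfolding BB_def by auto
  moreover have "lc r c1 B1 {..<k1} + lc r c2 B2 {..<k2} = lc r c BB {..<k1+k2}"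
  proof (rule eq_matI)
    fix i j assume ij: "i < dim_row (lc r c BB {..<k1 + k2})" "j < dim_col (lc r c BB {..<k1 + k2})"
    have "(\<Sum>x<k1+k2. c x * BB x $$ (i,j)) = (\<Sum>x<k1. c x * BB x $$ (i,j)) + (\<Sum>x<k2. c (k1+x) * BB (k1+x) $$ (i,j))"
      by (rule sum_lessThan_add)
    also have "\<dots> = (\<Sum>x<k1. c1 x * B1 x $$ (i,j)) + (\<Sum>x<k2. c2 x * B2 x $$ (i,j))"
      unfolding c_def BB_def by simp
    finally show "(lc r c1 B1 {..<k1} + lc r c2 B2 {..<k2}) $$ (i, j) = lc r c BB {..<k1 + k2} $$ (i, j)"
      using ij unfolding lc_def by simp
  qed (simp_all add: lc_def)
  ultimately show ?thesis unfolding mat_span_iff[OF X] 1(2) 2(2) by blast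
qed

lemma mat_span_smult:
  assumes X: "X \<subseteq> carrier_mat r r" and A: "A \<in> mat_span r X"
  shows "a \<cdot>\<^sub>m A \<in> mat_span r X"
proof -
  obtain k1 c1 B1 where 1: "\<forall>j<k1. B1 j \<in> X" "A = lc r c1 B1 {..<k1}" using A unfolding mat_span_iff[OF X] by blast
  have "a \<cdot>\<^sub>m A = lc r (\<lambda>j. a * c1 j) B1 {..<k1}"
    unfolding 1 lc_def by (auto intro!: eq_matI simp: sum_distrib_left mult.assoc)
  then show ?thesis using 1 unfolding mat_span_iff[OF X] by blast
qed

lemma lc_in_span:
  assumes X: "X \<subseteq> carrier_mat r r" and I: "finite I" and B: "\<forall>i\<in>I. B i \<in> mat_span r X"
  shows "lc r c B I \<in> mat_span r X"
  using I B
proof (induction I rule: finite_induct)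
  case empty
  have "lc r c B {} = 0\<^sub>m r r" unfolding lc_def by (auto intro!: eq_matI)
  then show ?case using mat_span_zero by metis
next
  case (insert i I)
  have Bi: "B i \<in> carrier_mat r r" using insert.prems mat_span_carrier[OF X] by auto
  have "lc r c B (insert i I) = c i \<cdot>\<^sub>m B i + lc r c B I"
    unfolding lc_def using insert.hyps Bi by (auto intro!: eq_matI)
  moreover have "c i \<cdot>\<^sub>m B i \<in> mat_span r X" using insert.prems by (intro mat_span_smult[OF X]) auto
  moreover have "lc r c B I \<in> mat_span r X" using insert.IH insert.prems by auto
  ultimately show ?case using mat_span_add[OF X] by metis
qed

lemma mat_span_trans:
  assumes X: "X \<subseteq> carrier_mat r r" and Y: "Y \<subseteq> mat_span r X"
  shows "mat_span r Y \<subseteq> mat_span r X"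
proof
  fix A assume A: "A \<in> mat_span r Y"
  have Yc: "Y \<subseteq> carrier_mat r r" using Y mat_span_carrier[OF X] by auto
  obtain k c B where 1: "\<forall>j<k. B j \<in> Y" "A = lc r c B {..<k}" using A unfolding mat_span_iff[OF Yc] by blast
  show "A \<in> mat_span r X" unfolding 1(2) by (rule lc_in_span[OF X]) (use 1 Y in auto)
qed

lemma mat_span_coeffs:
  assumes I: "finite I" and hc: "h ` I \<subseteq> carrier_mat r r" and Y: "Y \<in> mat_span r (h ` I)"
  shows "\<exists>a. Y = lc r a h I"
proof -
  obtain k c B where 1: "\<forall>j<k. B j \<in> h ` I" "Y = lc r c B {..<k}" using Y unfolding mat_span_iff[OF hc] by blast
  have "\<forall>j<k. \<exists>i\<in>I. B j = h i" using 1 by blast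
  then obtain \<iota> where io: "\<forall>j<k. \<iota> j \<in> I \<and> B j = h (\<iota> j)" by metis
  define a where "a i = (\<Sum>j\<in>{j\<in>{..<k}. \<iota> j = i}. c j)" for i
  have Ya: "Y = lc r a h I"
  proof (rule eq_matI)
    fix x y assume xy: "x < dim_row (lc r a h I)" "y < dim_col (lc r a h I)"
    have "(\<Sum>j<k. c j * B j $$ (x,y)) = (\<Sum>j<k. c j * h (\<iota> j) $$ (x,y))"
      using io by (auto intro!: sum.cong)
    also have "\<dots> = (\<Sum>i\<in>I. \<Sum>j\<in>{j\<in>{..<k}. \<iota> j = i}. c j * h (\<iota> j) $$ (x,y))"
      by (rule sum.group[symmetric]) (use io I in auto)
    also have "\<dots> = (\<Sum>i\<in>I. a i * h i $$ (x,y))"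
      unfolding a_def sum_distrib_right by (auto intro!: sum.cong)
    finally show "Y $$ (x, y) = lc r a h I $$ (x, y)" using xy 1 unfolding lc_def by simp
  qed (use 1 in \<open>auto simp: lc_def\<close>)
  show ?thesis by (rule exI[of _ a], fact Ya)
qed


lemma mult_low:
  fixes p q :: "'a::comm_ring_1 poly"
  assumes A: "\<forall>k<a. coeff p k = 0" and B: "\<forall>k<b. coeff q k = 0"
  shows "(\<forall>k<a+b. coeff (p*q) k = 0) \<and> coeff (p*q) (a+b) = coeff p a * coeff q b"
proof
  show "\<forall>k<a+b. coeff (p*q) k = 0"
  proof (intro allI impI)
    fix k assume k: "k < a+b"
    have "coeff (p*q) k = (\<Sum>i\<le>k. coeff p i * coeff q (k-i))" by (rule coeff_mult)
    also have "\<dots> = 0"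
    proof (rule sum.neutral, intro ballI)
      fix i assume ik: "i \<in> {..k}"
      show "coeff p i * coeff q (k-i) = 0"
      proof (cases "i < a")
        case True then show ?thesis using A by simp
      next
        case False then have "k - i < b" using k ik by auto
        then show ?thesis using B by simp
      qed
    qed
    finally show "coeff (p*q) k = 0" .
  qed
next
  have "coeff (p*q) (a+b) = (\<Sum>i\<le>a+b. coeff p i * coeff q (a+b-i))" by (rule coeff_mult)
  also have "\<dots> = (\<Sum>i\<le>a+b. if i = a then coeff p a * coeff q b else 0)"
  proof (rule sum.cong[OF refl])
    fix i assume i: "i \<in> {..a+b}"
    show "coeff p i * coeff q (a+b-i) = (if i = a then coeff p a * coeff q b else 0)"
    proof (cases "i < a")
      case True then show ?thesis using A by simp
    next
      case False
      show ?thesis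
      proof (cases "i = a")
        case True then show ?thesis by simp
      next
        case False2: False
        then have "a+b-i < b" using False i by auto
        then show ?thesis using B False2 by simp
      qed
    qed
  qed
  also have "\<dots> = coeff p a * coeff q b" by simp
  finally show "coeff (p*q) (a+b) = coeff p a * coeff q b" .
qed

lemma prod_low:
  fixes h :: "nat \<Rightarrow> 'a::comm_ring_1 poly"
  assumes "finite L" "\<forall>l\<in>L. \<forall>k<a l. coeff (h l) k = 0"
  shows "(\<forall>k<(\<Sum>l\<in>L. a l). coeff (\<Prod>l\<in>L. h l) k = 0) \<and>
         coeff (\<Prod>l\<in>L. h l) (\<Sum>l\<in>L. a l) = (\<Prod>l\<in>L. coeff (h l) (a l))"
  using assms
proof (induction L rule: finite_induct)
  case empty
  show ?case by simp
next
  case (insert x F)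
  have IH: "(\<forall>k<(\<Sum>l\<in>F. a l). coeff (\<Prod>l\<in>F. h l) k = 0) \<and>
         coeff (\<Prod>l\<in>F. h l) (\<Sum>l\<in>F. a l) = (\<Prod>l\<in>F. coeff (h l) (a l))"
    using insert.IH insert.prems by auto
  have hx: "\<forall>k<a x. coeff (h x) k = 0" using insert.prems by auto
  have e1: "(\<Prod>l\<in>insert x F. h l) = h x * (\<Prod>l\<in>F. h l)" using insert.hyps by simp
  have e2: "(\<Sum>l\<in>insert x F. a l) = a x + (\<Sum>l\<in>F. a l)" using insert.hyps by simp
  have e3: "(\<Prod>l\<in>insert x F. coeff (h l) (a l)) = coeff (h x) (a x) * (\<Prod>l\<in>F. coeff (h l) (a l))"
    using insert.hyps by simp
  show ?case unfolding e1 e2 e3 using mult_low[OF hx conjunct1[OF IH]] IH by simp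
qed

lemma vandermonde_nz:
  fixes w :: "nat \<Rightarrow> 'a::field"
  assumes inj: "inj_on w {..<d}"
  shows "det (mat d d (\<lambda>(l,j). w j ^ l)) \<noteq> 0"
proof
  define V where "V = mat d d (\<lambda>(l,j). w j ^ l)"
  have Vc: "V \<in> carrier_mat d d" unfolding V_def by simp
  assume "det (mat d d (\<lambda>(l,j). w j ^ l)) = 0"
  then have "det (transpose_mat V) = 0" using det_transpose[OF Vc] V_def by simp
  then obtain v where v: "v \<in> carrier_vec d" "v \<noteq> 0\<^sub>v d" "transpose_mat V *\<^sub>v v = 0\<^sub>v d"
    using det_0_iff_vec_prod_zero_field[of "transpose_mat V" d] Vc by auto
  define p where "p = (\<Sum>l<d. monom (v $ l) l)"
  have coeffp: "coeff p k = (if k < d then v $ k else 0)" for k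
    unfolding p_def by (simp add: coeff_sum coeff_monom)
  obtain l0 where l0: "l0 < d" "v $ l0 \<noteq> 0"
  proof -
    have "\<not> (\<forall>l<d. v $ l = 0)"
    proof
      assume "\<forall>l<d. v $ l = 0"
      then have "v = 0\<^sub>v d" using v(1) by (intro eq_vecI) auto
      then show False using v(2) by simp
    qed
    then show ?thesis using that by auto
  qed
  have pnz: "p \<noteq> 0" using coeffp[of l0] l0 by auto
  have degp: "degree p < d"
  proof -
    have "degree p \<le> d - 1" by (rule degree_le) (auto simp: coeffp)
    then show ?thesis using l0 by linarith
  qed
  have roots: "w ` {..<d} \<subseteq> {x. poly p x = 0}"
  proof
    fix x assume "x \<in> w ` {..<d}"
    then obtain j where j: "j < d" "x = w j" by auto
    have "poly p (w j) = (\<Sum>l<d. v $ l * w j ^ l)"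
      unfolding p_def by (simp add: poly_sum poly_monom)
    also have "\<dots> = (transpose_mat V *\<^sub>v v) $ j"
      using j v(1) Vc unfolding V_def
      by (auto simp: scalar_prod_def atLeast0LessThan mult.commute intro!: sum.cong)
    also have "\<dots> = 0" using v(3) j by simp
    finally show "x \<in> {x. poly p x = 0}" using j by simp
  qed
  have "d = card (w ` {..<d})" using card_image[OF inj] by simp
  also have "\<dots> \<le> card {x. poly p x = 0}" by (rule card_mono[OF poly_roots_finite[OF pnz] roots])
  also have "\<dots> \<le> degree p" by (rule card_poly_roots_bound[OF pnz])
  finally show False using degp by simp
qed

lemma idx_lt: "i < (r::nat) \<Longrightarrow> i' < r \<Longrightarrow> i * r + i' < r * r"
proof -
  assume i: "i < r" and i': "i' < r"
  have "Suc i * r \<le> r * r" using i by (intro mult_le_mono1) simp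
  then show ?thesis using i' by simp
qed

lemma idx_div: "i' < (r::nat) \<Longrightarrow> (i * r + i') div r = i"
  by simp
lemma idx_mod: "i' < (r::nat) \<Longrightarrow> (i * r + i') mod r = i'"
  by simp


lemma li_card_le:
  fixes C :: "nat \<Rightarrow> 'a::field mat"
  assumes S: "finite S" and Cc: "\<forall>e\<in>S. C e \<in> carrier_mat r r"
    and li: "\<forall>a. lc r a C S = 0\<^sub>m r r \<longrightarrow> (\<forall>e\<in>S. a e = 0)"
  shows "card S \<le> r^2"
proof (rule ccontr)
  define R where "R = r^2"
  assume "\<not> card S \<le> r^2"
  then have "Suc R \<le> card S" unfolding R_def by simp
  then obtain S' where S': "S' \<subseteq> S" "card S' = Suc R" "finite S'" by (rule obtain_subset_with_card_n)
  obtain h where h: "bij_betw h {0..<Suc R} S'" using ex_bij_betw_nat_finite[OF S'(3)] S'(2) by auto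
  define Mt :: "'a mat" where "Mt = mat (Suc R) (Suc R) (\<lambda>(k,j). if k < R then C (h j) $$ (k div r, k mod r) else 0)"
  have Mtc: "Mt \<in> carrier_mat (Suc R) (Suc R)" unfolding Mt_def by simp
  have u1: "transpose_mat Mt *\<^sub>v unit_vec (Suc R) R = 0\<^sub>v (Suc R)"
  proof (rule eq_vecI)
    fix j assume "j < dim_vec (0\<^sub>v (Suc R) :: 'a vec)"
    then have j: "j < Suc R" by simp
    have "(transpose_mat Mt *\<^sub>v unit_vec (Suc R) R) $ j = row (transpose_mat Mt) j \<bullet> unit_vec (Suc R) R"
      using j Mtc by simp
    also have "\<dots> = row (transpose_mat Mt) j $ R" by (rule scalar_prod_right_unit) simp
    also have "\<dots> = Mt $$ (R, j)" using j Mtc by simp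
    also have "\<dots> = 0" unfolding Mt_def using j by simp
    finally show "(transpose_mat Mt *\<^sub>v unit_vec (Suc R) R) $ j = 0\<^sub>v (Suc R) $ j" using j by simp
  qed (use Mtc in simp)
  have u2: "unit_vec (Suc R) R \<noteq> (0\<^sub>v (Suc R) :: 'a vec)"
  proof
    assume "unit_vec (Suc R) R = (0\<^sub>v (Suc R) :: 'a vec)"
    then have "unit_vec (Suc R) R $ R = (0\<^sub>v (Suc R) :: 'a vec) $ R" by simp
    then show False by simp
  qed
  have ex: "\<exists>u. u \<in> carrier_vec (Suc R) \<and> u \<noteq> 0\<^sub>v (Suc R) \<and> transpose_mat Mt *\<^sub>v u = 0\<^sub>v (Suc R)"
    by (intro exI[of _ "unit_vec (Suc R) R"] conjI) (rule unit_vec_carrier, fact u2, fact u1)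
  have "det (transpose_mat Mt) = 0"
    by (subst det_0_iff_vec_prod_zero_field[OF transpose_carrier_mat[THEN iffD2, OF Mtc]]) (rule ex)
  then have "det Mt = 0" using det_transpose[OF Mtc] by simp
  then obtain v where v: "v \<in> carrier_vec (Suc R)" "v \<noteq> 0\<^sub>v (Suc R)" "Mt *\<^sub>v v = 0\<^sub>v (Suc R)"
    using det_0_iff_vec_prod_zero_field[OF Mtc] by auto
  have Mv: "(\<Sum>j\<in>{0..<Suc R}. C (h j) $$ (k div r, k mod r) * v $ j) = 0" if k: "k < R" for k
  proof -
    have "(Mt *\<^sub>v v) $ k = 0" using v(3) k by simp
    moreover have "(Mt *\<^sub>v v) $ k = (\<Sum>j\<in>{0..<Suc R}. C (h j) $$ (k div r, k mod r) * v $ j)"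
      using k v(1) Mtc unfolding Mt_def by (auto simp: scalar_prod_def intro!: sum.cong)
    ultimately show ?thesis by simp
  qed
  define a where "a e = (if e \<in> S' then v $ (the_inv_into {0..<Suc R} h e) else 0)" for e
  have ah: "a (h j) = v $ j" if "j < Suc R" for j
    using that h unfolding a_def bij_betw_def
    by (auto simp: the_inv_into_f_f)
  have "lc r a C S = 0\<^sub>m r r"
  proof (rule eq_matI)
    fix i i' assume ii: "i < dim_row (0\<^sub>m r r :: 'a mat)" "i' < dim_col (0\<^sub>m r r :: 'a mat)"
    then have i: "i < r" and i': "i' < r" by auto
    have "(\<Sum>e\<in>S. a e * C e $$ (i,i')) = (\<Sum>e\<in>S'. a e * C e $$ (i,i'))"
      by (rule sum.mono_neutral_right) (use S S' in \<open>auto simp: a_def\<close>)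
    also have "\<dots> = (\<Sum>j\<in>{0..<Suc R}. a (h j) * C (h j) $$ (i,i'))"
      by (rule sum.reindex_bij_betw[symmetric, OF h])
    also have "\<dots> = (\<Sum>j\<in>{0..<Suc R}. C (h j) $$ ((i*r+i') div r, (i*r+i') mod r) * v $ j)"
      using ah i' by (auto intro!: sum.cong)
    also have "\<dots> = 0" using Mv[of "i*r+i'"] idx_lt[OF i i'] unfolding R_def by (simp add: power2_eq_square)
    finally show "lc r a C S $$ (i, i') = 0\<^sub>m r r $$ (i, i')" using i i' unfolding lc_def by simp
  qed (simp_all add: lc_def)
  then have "\<forall>e\<in>S. a e = 0" using li by blast
  then have "\<forall>j<Suc R. v $ j = 0"
  proof (intro allI impI)
    fix j assume j: "j < Suc R" and z: "\<forall>e\<in>S. a e = 0"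
    have "h j \<in> S" using h S'(1) j unfolding bij_betw_def by auto
    then show "v $ j = 0" using z ah[OF j] by simp
  qed
  then have "v = 0\<^sub>v (Suc R)" using v(1) by (intro eq_vecI) auto
  then show False using v(2) by simp
qed


lemma det_eval: "det (map_mat (\<lambda>q. poly q (a::'a::comm_ring_1)) A) = poly (det A) a"
proof -
  interpret h: comm_ring_hom "\<lambda>p. poly p a" by unfold_locales auto
  show ?thesis by simp
qed

lemma coeff_of_int_mult: "coeff (of_int k * p) n = of_int k * coeff (p::'a::comm_ring_1 poly) n"
  by (simp add: of_int_poly)

lemma pow_swap: "((x::'a::comm_monoid_mult) ^ a) ^ b = (x ^ b) ^ a"
  by (simp add: power_mult[symmetric] mult.commute)

lemma omega_inj:
  fixes \<omega> :: "'a::field"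
  assumes nz: "\<omega> \<noteq> 0" and ord: "\<forall>k. 0<k \<longrightarrow> k<T \<longrightarrow> \<omega>^k \<noteq> 1"
  shows "inj_on (\<lambda>a. \<omega>^a) {..<T}"
proof -
  have *: "a = b" if "a < T" "b < T" "\<omega>^a = \<omega>^b" "a \<le> b" for a b
  proof (rule ccontr)
    assume "a \<noteq> b"
    then have ab: "0 < b - a" "b - a < T" using that by auto
    have "\<omega>^b = \<omega>^a * \<omega>^(b-a)" using that(4) by (simp add: power_add[symmetric])
    then have "\<omega>^a * \<omega>^(b-a) = \<omega>^a * 1" using that(3) by simp
    then have "\<omega>^(b-a) = 1" using nz by (simp del: mult_cancel_left1)
    then show False using ord ab by auto
  qed
  show ?thesis unfolding inj_on_def
  proof (intro ballI impI)
    fix a b assume "a \<in> {..<T}" "b \<in> {..<T}" "\<omega>^a = \<omega>^b"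
    then show "a = b" using *[of a b] *[of b a] by (cases "a \<le> b") auto
  qed
qed


lemma core:
  fixes C :: "nat \<Rightarrow> 'a::field mat" and \<omega> :: 'a
  assumes Cc: "\<forall>e<T. C e \<in> carrier_mat r r"
    and T: "T \<ge> 1" and r: "r \<ge> 1"
    and \<omega>nz: "\<omega> \<noteq> 0" and \<omega>ord: "\<forall>k. 0<k \<longrightarrow> k<T \<longrightarrow> \<omega>^k \<noteq> 1"
  shows "\<exists>P. P \<noteq> 0 \<and> degree P < r^2 * T \<and> (\<forall>\<alpha>. poly P \<alpha> \<noteq> 0 \<longrightarrow>
           (\<forall>e<T. C e \<in> mat_span r ((\<lambda>l. lc r (\<lambda>e. (\<omega>^l*\<alpha>)^e) C {..<T}) ` {..<r^2})))"
proof -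
  define S where "S = {e. e < T \<and> C e \<notin> mat_span r (C ` {..<e})}"
  have ST: "S \<subseteq> {..<T}" unfolding S_def by auto
  have Sfin: "finite S" using ST finite_subset by blast
  have CcS: "\<forall>e\<in>S. C e \<in> carrier_mat r r" using Cc ST by auto
  have Csub: "C ` (S \<inter> X) \<subseteq> carrier_mat r r" for X using CcS by auto

  have step: "e < T \<longrightarrow> C e \<in> mat_span r (C ` (S \<inter> {..e})) \<and> (e \<notin> S \<longrightarrow> C e \<in> mat_span r (C ` (S \<inter> {..<e})))" for e
  proof (induction e rule: less_induct)
    case (less e)
    show ?case
    proof
      assume eT: "e < T"
      show "C e \<in> mat_span r (C ` (S \<inter> {..e})) \<and> (e \<notin> S \<longrightarrow> C e \<in> mat_span r (C ` (S \<inter> {..<e})))"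
      proof (cases "e \<in> S")
        case True
        have "C e \<in> mat_span r (C ` (S \<inter> {..e}))" by (rule mat_span_gen[OF Csub]) (use True in auto)
        then show ?thesis using True by simp
      next
        case False
        then have ns: "C e \<in> mat_span r (C ` {..<e})" using eT unfolding S_def by auto
        have sub: "C ` {..<e} \<subseteq> mat_span r (C ` (S \<inter> {..<e}))"
        proof
          fix x assume "x \<in> C ` {..<e}"
          then obtain e' where e': "e' < e" "x = C e'" by auto
          have "C e' \<in> mat_span r (C ` (S \<inter> {..e'}))" using less.IH[OF e'(1)] e'(1) eT by auto
          also have "\<dots> \<subseteq> mat_span r (C ` (S \<inter> {..<e}))" by (rule mat_span_mono) (use e'(1) in auto)
          finally show "x \<in> mat_span r (C ` (S \<inter> {..<e}))" using e' by simp
        qed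
        have "mat_span r (C ` {..<e}) \<subseteq> mat_span r (C ` (S \<inter> {..<e}))"
          by (rule mat_span_trans[OF Csub sub])
        with ns have "C e \<in> mat_span r (C ` (S \<inter> {..<e}))" by auto
        moreover have "mat_span r (C ` (S \<inter> {..<e})) \<subseteq> mat_span r (C ` (S \<inter> {..e}))"
          by (rule mat_span_mono) auto
        ultimately show ?thesis using False by auto
      qed
    qed
  qed

  have coef: "\<exists>a. C e = lc r a C S \<and> (\<forall>s. e < s \<longrightarrow> a s = 0) \<and> (e \<in> S \<longrightarrow> a e = 1)" if eT: "e < T" for e
  proof (cases "e \<in> S")
    case True
    define a where "a s = (if s = e then 1 else (0::'a))" for s
    have "C e = lc r a C S"
    proof (rule eq_matI)
      fix i j assume ij: "i < dim_row (lc r a C S)" "j < dim_col (lc r a C S)"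
      have "(\<Sum>s\<in>S. a s * C s $$ (i,j)) = (\<Sum>s\<in>S. if s = e then C s $$ (i,j) else 0)"
        unfolding a_def by (rule sum.cong) auto
      also have "\<dots> = C e $$ (i,j)" using True Sfin by simp
      finally show "C e $$ (i,j) = lc r a C S $$ (i,j)" using ij unfolding lc_def by simp
    qed (use Cc eT in \<open>auto simp: lc_def\<close>)
    then show ?thesis using True unfolding a_def by auto
  next
    case False
    then have m: "C e \<in> mat_span r (C ` (S \<inter> {..<e}))" using step[of e] eT by auto
    obtain a0 where a0: "C e = lc r a0 C (S \<inter> {..<e})"
      using mat_span_coeffs[OF _ Csub m] Sfin by auto
    define a where "a s = (if s \<in> S \<inter> {..<e} then a0 s else 0)" for s
    have "C e = lc r a C S"
    proof -
      have "lc r a C S = lc r a0 C (S \<inter> {..<e})"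
      proof (rule eq_matI)
        fix i j assume ij: "i < dim_row (lc r a0 C (S \<inter> {..<e}))" "j < dim_col (lc r a0 C (S \<inter> {..<e}))"
        have "(\<Sum>s\<in>S. a s * C s $$ (i,j)) = (\<Sum>s\<in>S \<inter> {..<e}. a s * C s $$ (i,j))"
          by (rule sum.mono_neutral_right) (use Sfin in \<open>auto simp: a_def\<close>)
        also have "\<dots> = (\<Sum>s\<in>S \<inter> {..<e}. a0 s * C s $$ (i,j))"
          by (rule sum.cong) (auto simp: a_def)
        finally show "lc r a C S $$ (i,j) = lc r a0 C (S \<inter> {..<e}) $$ (i,j)" using ij unfolding lc_def by simp
      qed (simp_all add: lc_def)
      then show ?thesis using a0 by simp
    qed
    then show ?thesis using False unfolding a_def by auto
  qed
  then obtain A where A: "\<And>e. e < T \<Longrightarrow> C e = lc r (A e) C S \<and> (\<forall>s. e < s \<longrightarrow> A e s = 0) \<and> (e \<in> S \<longrightarrow> A e e = 1)"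
    by metis

  have Qid: "lc r (\<lambda>e. u^e) C {..<T} = lc r (\<lambda>s. \<Sum>e<T. A e s * u^e) C S" for u
  proof (rule eq_matI)
    fix i j assume ij: "i < dim_row (lc r (\<lambda>s. \<Sum>e<T. A e s * u^e) C S)" "j < dim_col (lc r (\<lambda>s. \<Sum>e<T. A e s * u^e) C S)"
    then have i: "i < r" and j: "j < r" by (auto simp: lc_def)
    have Ce: "C e $$ (i,j) = (\<Sum>s\<in>S. A e s * C s $$ (i,j))" if "e < T" for e
    proof -
      have "C e $$ (i,j) = lc r (A e) C S $$ (i,j)" using A[OF that] by simp
      also have "\<dots> = (\<Sum>s\<in>S. A e s * C s $$ (i,j))" using i j unfolding lc_def by simp
      finally show ?thesis .
    qed
    have "(\<Sum>e<T. u^e * C e $$ (i,j)) = (\<Sum>e<T. u^e * (\<Sum>s\<in>S. A e s * C s $$ (i,j)))"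
      using Ce by (auto intro!: sum.cong)
    also have "\<dots> = (\<Sum>s\<in>S. (\<Sum>e<T. A e s * u^e) * C s $$ (i,j))"
      by (simp add: sum_distrib_left sum_distrib_right sum.swap[of _ S] algebra_simps)
    finally show "lc r (\<lambda>e. u^e) C {..<T} $$ (i,j) = lc r (\<lambda>s. \<Sum>e<T. A e s * u^e) C S $$ (i,j)"
      using i j unfolding lc_def by simp
  qed (simp_all add: lc_def)

  have li: "\<forall>a. lc r a C S = 0\<^sub>m r r \<longrightarrow> (\<forall>e\<in>S. a e = 0)"
  proof (intro allI impI ballI, rule ccontr)
    fix a e assume z: "lc r a C S = 0\<^sub>m r r" and eS: "e \<in> S" and ne: "a e \<noteq> 0"
    define NZ where "NZ = {s\<in>S. a s \<noteq> 0}"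
    have NZfin: "finite NZ" "NZ \<noteq> {}" using Sfin eS ne by (auto simp: NZ_def)
    define m where "m = Max NZ"
    have mNZ: "m \<in> NZ" using Max_in[OF NZfin] m_def by auto
    then have mS: "m \<in> S" "a m \<noteq> 0" by (auto simp: NZ_def)
    have mmax: "a s = 0" if "s \<in> S" "m < s" for s
    proof (rule ccontr)
      assume "a s \<noteq> 0"
      then have "s \<in> NZ" using that by (auto simp: NZ_def)
      then have "s \<le> m" using Max_ge[OF NZfin(1)] m_def by auto
      then show False using that by auto
    qed
    have mT: "m < T" using mS ST by auto
    have "C m = lc r (\<lambda>s. - a s / a m) C (S \<inter> {..<m})"
    proof (rule eq_matI)
      fix i j assume ij: "i < dim_row (lc r (\<lambda>s. - a s / a m) C (S \<inter> {..<m}))"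
        "j < dim_col (lc r (\<lambda>s. - a s / a m) C (S \<inter> {..<m}))"
      then have i: "i < r" and j: "j < r" by (auto simp: lc_def)
      have "0 = lc r a C S $$ (i,j)" using z i j by simp
      also have "\<dots> = (\<Sum>s\<in>S. a s * C s $$ (i,j))" using i j unfolding lc_def by simp
      also have "\<dots> = (\<Sum>s\<in>S \<inter> {..m}. a s * C s $$ (i,j))"
      proof -
        have z0: "\<forall>s\<in>S - S \<inter> {..m}. a s * C s $$ (i,j) = 0" using mmax by (auto simp: not_le)
        show ?thesis by (rule sum.mono_neutral_right) (use Sfin z0 in auto)
      qed
      also have "S \<inter> {..m} = insert m (S \<inter> {..<m})" using mS by auto
      also have "(\<Sum>s\<in>insert m (S \<inter> {..<m}). a s * C s $$ (i,j)) = a m * C m $$ (i,j) + (\<Sum>s\<in>S \<inter> {..<m}. a s * C s $$ (i,j))"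
        using Sfin by (simp add: sum.insert)
      finally have eq: "a m * C m $$ (i,j) = - (\<Sum>s\<in>S \<inter> {..<m}. a s * C s $$ (i,j))"
        by (simp add: eq_neg_iff_add_eq_0 add.commute)
      have "C m $$ (i,j) = - (\<Sum>s\<in>S \<inter> {..<m}. a s * C s $$ (i,j)) / a m"
        using eq mS(2) by (simp add: field_simps)
      also have "\<dots> = (\<Sum>s\<in>S \<inter> {..<m}. - a s / a m * C s $$ (i,j))"
        by (simp add: sum_divide_distrib sum_negf[symmetric] field_simps)
      finally show "C m $$ (i,j) = lc r (\<lambda>s. - a s / a m) C (S \<inter> {..<m}) $$ (i,j)"
        using i j unfolding lc_def by simp
    qed (use Cc mT in \<open>auto simp: lc_def\<close>)
    moreover have "lc r (\<lambda>s. - a s / a m) C (S \<inter> {..<m}) \<in> mat_span r (C ` {..<m})"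
    proof (rule lc_in_span)
      show "C ` {..<m} \<subseteq> carrier_mat r r" using Cc mT by auto
      show "finite (S \<inter> {..<m})" by simp
      show "\<forall>i\<in>S \<inter> {..<m}. C i \<in> mat_span r (C ` {..<m})"
        using Cc mT by (auto intro!: mat_span_gen)
    qed
    ultimately have "C m \<in> mat_span r (C ` {..<m})" by simp
    then show False using mS(1) unfolding S_def by auto
  qed

  have dle: "card S \<le> r^2" by (rule li_card_le[OF Sfin CcS li])
  define d where "d = card S"
  obtain h where h: "bij_betw h {0..<d} S" using ex_bij_betw_nat_finite[OF Sfin] d_def by auto
  have hS: "h j \<in> S" if "j < d" for j using h that unfolding bij_betw_def by auto
  have hT: "h j < T" if "j < d" for j using hS[OF that] ST by auto

  define Gp :: "'a poly mat" where "Gp = mat d d (\<lambda>(l,j). \<Sum>e<T. monom (A e (h j) * (\<omega>^l)^e) e)"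
  have Gpc: "Gp \<in> carrier_mat d d" unfolding Gp_def by simp
  have Gcoeff: "coeff (Gp $$ (l,j)) k = (if k < T then A k (h j) * (\<omega>^l)^k else 0)" if "l < d" "j < d" for l j k
    using that unfolding Gp_def by (simp add: coeff_sum coeff_monom)
  define P where "P = det Gp"

  have degP: "degree P \<le> (T-1) * d"
    unfolding P_def
  proof (rule degree_det_le[OF _ Gpc])
    fix l j assume "l < d" "j < d"
    then show "degree (Gp $$ (l,j)) \<le> T - 1" by (intro degree_le) (auto simp: Gcoeff)
  qed
  have "(T-1) * d \<le> (T-1) * r^2" using dle d_def by simp
  also have "\<dots> < T * r^2" using T r by simp
  finally have degP': "degree P < r^2 * T" using degP by (simp add: mult.commute)

  define w where "w j = \<omega> ^ (h j)" for j
  define V where "V = mat d d (\<lambda>(l,j). w j ^ l)"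
  have Vc: "V \<in> carrier_mat d d" unfolding V_def by simp
  have injw: "inj_on w {..<d}"
  proof -
    have "inj_on h {..<d}" using h unfolding bij_betw_def by (simp add: atLeast0LessThan)
    moreover have "inj_on (\<lambda>a. \<omega>^a) (h ` {..<d})"
      by (rule inj_on_subset[OF omega_inj[OF \<omega>nz \<omega>ord]]) (use hT in auto)
    ultimately show ?thesis unfolding w_def using comp_inj_on[of h "{..<d}" "\<lambda>a. \<omega>^a"] by (simp add: o_def)
  qed
  have Vnz: "det V \<noteq> 0" unfolding V_def by (rule vandermonde_nz[OF injw])

  have coeffP: "coeff P (\<Sum>j\<in>{0..<d}. h j) = det V"
  proof -
    have "coeff P (\<Sum>j\<in>{0..<d}. h j) = (\<Sum>p\<in>{p. p permutes {0..<d}}. signof p * coeff (\<Prod>l\<in>{0..<d}. Gp $$ (l, p l)) (\<Sum>j\<in>{0..<d}. h j))"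
      unfolding P_def det_def'[OF Gpc] by (simp add: coeff_sum coeff_of_int_mult)
    also have "\<dots> = (\<Sum>p\<in>{p. p permutes {0..<d}}. signof p * (\<Prod>l\<in>{0..<d}. V $$ (l, p l)))"
    proof (rule sum.cong[OF refl])
      fix p assume "p \<in> {p. p permutes {0..<d}}"
      then have p: "p permutes {0..<d}" by simp
      have pl: "p l < d" if "l < d" for l using p that by (simp add: permutes_in_image)
      have sp: "(\<Sum>j\<in>{0..<d}. h j) = (\<Sum>l\<in>{0..<d}. h (p l))"
        using sum.permute[OF p, of h] by (simp add: o_def)
      have low: "\<forall>l\<in>{0..<d}. \<forall>k<h (p l). coeff (Gp $$ (l, p l)) k = 0"
      proof (intro ballI allI impI)
        fix l k assume l: "l \<in> {0..<d}" and k: "k < h (p l)"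
        show "coeff (Gp $$ (l, p l)) k = 0"
        proof (cases "k < T")
          case True
          then have "A k (h (p l)) = 0" using A[OF True] k by auto
          then show ?thesis using Gcoeff[of l "p l" k] l pl by simp
        next
          case False then show ?thesis using Gcoeff[of l "p l" k] l pl by simp
        qed
      qed
      have "coeff (\<Prod>l\<in>{0..<d}. Gp $$ (l, p l)) (\<Sum>j\<in>{0..<d}. h j) = (\<Prod>l\<in>{0..<d}. coeff (Gp $$ (l, p l)) (h (p l)))"
        unfolding sp using prod_low[OF _ low] by simp
      also have "\<dots> = (\<Prod>l\<in>{0..<d}. V $$ (l, p l))"
      proof (rule prod.cong[OF refl])
        fix l assume l: "l \<in> {0..<d}"
        then have pl': "p l < d" using pl by simp
        have "A (h (p l)) (h (p l)) = 1" using A[OF hT[OF pl']] hS[OF pl'] by auto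
        then show "coeff (Gp $$ (l, p l)) (h (p l)) = V $$ (l, p l)"
          using Gcoeff[of l "p l" "h (p l)"] l pl' hT[OF pl'] unfolding V_def w_def
          by (simp add: pow_swap)
      qed
      finally show "signof p * coeff (\<Prod>l\<in>{0..<d}. Gp $$ (l, p l)) (\<Sum>j\<in>{0..<d}. h j) = signof p * (\<Prod>l\<in>{0..<d}. V $$ (l, p l))"
        by simp
    qed
    also have "\<dots> = det V" unfolding det_def'[OF Vc] by simp
    finally show ?thesis .
  qed
  have Pnz: "P \<noteq> 0"
  proof
    assume "P = 0"
    then have "coeff P (\<Sum>j\<in>{0..<d}. h j) = 0" by simp
    then show False using coeffP Vnz by simp
  qed

  define Qset where "Qset \<alpha> = (\<lambda>l. lc r (\<lambda>e. (\<omega>^l*\<alpha>)^e) C {..<T}) ` {..<r^2}" for \<alpha>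
  have good: "\<forall>e<T. C e \<in> mat_span r (Qset \<alpha>)" if Pa: "poly P \<alpha> \<noteq> 0" for \<alpha>
  proof -
    define G where "G = map_mat (\<lambda>q. poly q \<alpha>) Gp"
    have Gc: "G \<in> carrier_mat d d" unfolding G_def using Gpc by simp
    have detG: "det G \<noteq> 0" unfolding G_def det_eval using Pa P_def by simp
    have Gent: "G $$ (l,j) = (\<Sum>e<T. A e (h j) * (\<omega>^l*\<alpha>)^e)" if "l < d" "j < d" for l j
      using that Gpc unfolding G_def Gp_def
      by (simp add: poly_sum poly_monom power_mult_distrib mult.assoc)
    have Xc: "Qset \<alpha> \<subseteq> carrier_mat r r" unfolding Qset_def by auto
    define Qf where "Qf l = lc r (\<lambda>e. (\<omega>^l*\<alpha>)^e) C {..<T}" for l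
    have Qfent: "Qf l $$ (i,i') = (\<Sum>j\<in>{0..<d}. G $$ (l,j) * C (h j) $$ (i,i'))" if "l < d" "i < r" "i' < r" for l i i'
    proof -
      have "Qf l $$ (i,i') = lc r (\<lambda>s. \<Sum>e<T. A e s * (\<omega>^l*\<alpha>)^e) C S $$ (i,i')"
        unfolding Qf_def Qid by simp
      also have "\<dots> = (\<Sum>s\<in>S. (\<Sum>e<T. A e s * (\<omega>^l*\<alpha>)^e) * C s $$ (i,i'))"
        using that unfolding lc_def by simp
      also have "\<dots> = (\<Sum>j\<in>{0..<d}. (\<Sum>e<T. A e (h j) * (\<omega>^l*\<alpha>)^e) * C (h j) $$ (i,i'))"
        by (rule sum.reindex_bij_betw[symmetric, OF h])
      also have "\<dots> = (\<Sum>j\<in>{0..<d}. G $$ (l,j) * C (h j) $$ (i,i'))"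
        using Gent that by (auto intro!: sum.cong)
      finally show ?thesis .
    qed
    define Ad where "Ad = adj_mat G"
    have Adc: "Ad \<in> carrier_mat d d" and AdG: "Ad * G = det G \<cdot>\<^sub>m 1\<^sub>m d"
      using adj_mat[OF Gc] unfolding Ad_def by auto
    have AdGent: "(\<Sum>l\<in>{0..<d}. Ad $$ (j0,l) * G $$ (l,j)) = (if j0 = j then det G else 0)"
      if "j0 < d" "j < d" for j0 j
    proof -
      have e1: "(Ad * G) $$ (j0,j) = (\<Sum>l\<in>{0..<d}. Ad $$ (j0,l) * G $$ (l,j))"
        using that Adc Gc by (simp add: scalar_prod_def)
      have e2: "(Ad * G) $$ (j0,j) = (if j0 = j then det G else 0)"
        unfolding AdG using that by simp
      show ?thesis using e1 e2 by simp
    qed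
    have inS: "C (h j0) \<in> mat_span r (Qset \<alpha>)" if j0: "j0 < d" for j0
    proof -
      have "C (h j0) = lc r (\<lambda>l. Ad $$ (j0,l) / det G) Qf {0..<d}"
      proof (rule eq_matI)
        fix i i' assume ii: "i < dim_row (lc r (\<lambda>l. Ad $$ (j0,l) / det G) Qf {0..<d})"
          "i' < dim_col (lc r (\<lambda>l. Ad $$ (j0,l) / det G) Qf {0..<d})"
        then have i: "i < r" and i': "i' < r" by (auto simp: lc_def)
        have "(\<Sum>l\<in>{0..<d}. Ad $$ (j0,l) / det G * Qf l $$ (i,i'))
            = (\<Sum>l\<in>{0..<d}. Ad $$ (j0,l) / det G * (\<Sum>j\<in>{0..<d}. G $$ (l,j) * C (h j) $$ (i,i')))"
          using Qfent i i' by (auto intro!: sum.cong)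
        also have "\<dots> = (\<Sum>l\<in>{0..<d}. \<Sum>j\<in>{0..<d}. Ad $$ (j0,l) / det G * (G $$ (l,j) * C (h j) $$ (i,i')))"
          by (simp add: sum_distrib_left)
        also have "\<dots> = (\<Sum>j\<in>{0..<d}. \<Sum>l\<in>{0..<d}. Ad $$ (j0,l) / det G * (G $$ (l,j) * C (h j) $$ (i,i')))"
          by (rule sum.swap)
        also have "\<dots> = (\<Sum>j\<in>{0..<d}. (\<Sum>l\<in>{0..<d}. Ad $$ (j0,l) * G $$ (l,j)) / det G * C (h j) $$ (i,i'))"
        proof (rule sum.cong[OF refl])
          fix j
          have "(\<Sum>l\<in>{0..<d}. Ad $$ (j0,l) / det G * (G $$ (l,j) * C (h j) $$ (i,i')))
              = (\<Sum>l\<in>{0..<d}. (Ad $$ (j0,l) * G $$ (l,j)) * (C (h j) $$ (i,i') / det G))"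
            by (rule sum.cong[OF refl]) (simp add: field_simps)
          also have "\<dots> = (\<Sum>l\<in>{0..<d}. Ad $$ (j0,l) * G $$ (l,j)) * (C (h j) $$ (i,i') / det G)"
            by (rule sum_distrib_right[symmetric])
          finally show "(\<Sum>l\<in>{0..<d}. Ad $$ (j0,l) / det G * (G $$ (l,j) * C (h j) $$ (i,i')))
              = (\<Sum>l\<in>{0..<d}. Ad $$ (j0,l) * G $$ (l,j)) / det G * C (h j) $$ (i,i')" by simp
        qed
        also have "\<dots> = (\<Sum>j\<in>{0..<d}. (if j = j0 then C (h j) $$ (i,i') else 0))"
          by (rule sum.cong[OF refl]) (use AdGent[OF j0] detG in auto)
        also have "\<dots> = C (h j0) $$ (i,i')" using j0 by simp
        finally show "C (h j0) $$ (i,i') = lc r (\<lambda>l. Ad $$ (j0,l) / det G) Qf {0..<d} $$ (i,i')"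
          using i i' unfolding lc_def by simp
      qed (use hT[OF j0] Cc in \<open>auto simp: lc_def\<close>)
      also have "\<dots> \<in> mat_span r (Qset \<alpha>)"
      proof (rule lc_in_span[OF Xc])
        show "finite {0..<d}" by simp
        show "\<forall>i\<in>{0..<d}. Qf i \<in> mat_span r (Qset \<alpha>)"
        proof
          fix l assume "l \<in> {0..<d}"
          then have "l < r^2" using dle d_def by auto
          then have "Qf l \<in> Qset \<alpha>" unfolding Qf_def Qset_def by auto
          then show "Qf l \<in> mat_span r (Qset \<alpha>)" by (rule mat_span_gen[OF Xc])
        qed
      qed
      finally show ?thesis .
    qed
    have CS: "\<forall>s\<in>S. C s \<in> mat_span r (Qset \<alpha>)"
    proof
      fix s assume "s \<in> S"
      then obtain j0 where "j0 \<in> {0..<d}" "s = h j0" using h unfolding bij_betw_def by auto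
      then show "C s \<in> mat_span r (Qset \<alpha>)" using inS by auto
    qed
    show ?thesis
    proof (intro allI impI)
      fix e assume eT: "e < T"
      have "C e = lc r (A e) C S" using A[OF eT] by simp
      also have "\<dots> \<in> mat_span r (Qset \<alpha>)" by (rule lc_in_span[OF Xc Sfin CS])
      finally show "C e \<in> mat_span r (Qset \<alpha>)" .
    qed
  qed
  show ?thesis
    using Pnz degP' good unfolding Qset_def by blast
qed


lemma prod_mats_Suc: "prod_mats r (Suc D) A = prod_mats r D A * A D"
  unfolding prod_mats_def by simp

lemma prod_mats_carrier: "(\<forall>i<D. A i \<in> carrier_mat r r) \<Longrightarrow> prod_mats r D A \<in> carrier_mat r r"
proof (induction D)
  case 0 then show ?case unfolding prod_mats_def by simp
next
  case (Suc D) then show ?case unfolding prod_mats_Suc by (intro mult_carrier_mat) auto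
qed

lemma eval_mult: "A \<in> carrier_mat nr n \<Longrightarrow> B \<in> carrier_mat n nc \<Longrightarrow>
   map_mat (\<lambda>q. poly q (a::'a::comm_ring_1)) (A * B) = map_mat (\<lambda>q. poly q a) A * map_mat (\<lambda>q. poly q a) B"
proof -
  interpret h: comm_ring_hom "\<lambda>p. poly p a" by unfold_locales auto
  show "A \<in> carrier_mat nr n \<Longrightarrow> B \<in> carrier_mat n nc \<Longrightarrow> ?thesis" by (rule h.mat_hom_mult)
qed

lemma prod_mats_eval:
  fixes A :: "nat \<Rightarrow> 'a::comm_ring_1 poly mat"
  shows "(\<forall>i<D. A i \<in> carrier_mat r r) \<Longrightarrow>
    map_mat (\<lambda>q. poly q x) (prod_mats r D A) = prod_mats r D (\<lambda>i. map_mat (\<lambda>q. poly q x) (A i))"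
proof (induction D)
  case 0 then show ?case unfolding prod_mats_def by (auto intro!: eq_matI)
next
  case (Suc D)
  have c: "prod_mats r D A \<in> carrier_mat r r" using Suc.prems by (intro prod_mats_carrier) auto
  have "map_mat (\<lambda>q. poly q x) (prod_mats r (Suc D) A)
      = map_mat (\<lambda>q. poly q x) (prod_mats r D A) * map_mat (\<lambda>q. poly q x) (A D)"
    unfolding prod_mats_Suc by (rule eval_mult[OF c]) (use Suc.prems in auto)
  then show ?case using Suc by (simp add: prod_mats_Suc)
qed

lemma prod_mats_deg:
  fixes A :: "nat \<Rightarrow> 'a::comm_ring_1 poly mat"
  shows "(\<forall>i<D. A i \<in> carrier_mat r r \<and> (\<forall>a<r. \<forall>b<r. degree (A i $$ (a,b)) \<le> k)) \<Longrightarrow>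
    \<forall>a<r. \<forall>b<r. degree (prod_mats r D A $$ (a,b)) \<le> D * k"
proof (induction D)
  case 0 then show ?case unfolding prod_mats_def by (auto simp: one_mat_def)
next
  case (Suc D)
  have c: "prod_mats r D A \<in> carrier_mat r r" using Suc.prems by (intro prod_mats_carrier) auto
  have AD: "A D \<in> carrier_mat r r" using Suc.prems by auto
  have IH: "\<forall>a<r. \<forall>b<r. degree (prod_mats r D A $$ (a,b)) \<le> D * k" using Suc by auto
  show ?case
  proof (intro allI impI)
    fix a b assume a: "a < r" and b: "b < r"
    have "prod_mats r (Suc D) A $$ (a,b) = (\<Sum>c\<in>{0..<r}. prod_mats r D A $$ (a,c) * A D $$ (c,b))"
      unfolding prod_mats_Suc using a b c AD by (simp add: scalar_prod_def)
    also have "degree \<dots> \<le> D * k + k"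
    proof (rule degree_sum_le)
      fix c assume "c \<in> {0..<r}"
      then have cr: "c < r" by simp
      have "degree (prod_mats r D A $$ (a,c) * A D $$ (c,b)) \<le> degree (prod_mats r D A $$ (a,c)) + degree (A D $$ (c,b))"
        by (rule degree_mult_le)
      also have "\<dots> \<le> D * k + k" using IH a cr b Suc.prems by (intro add_mono) auto
      finally show "degree (prod_mats r D A $$ (a,c) * A D $$ (c,b)) \<le> D * k + k" .
    qed simp
    finally show "degree (prod_mats r (Suc D) A $$ (a,b)) \<le> Suc D * k" by simp
  qed
qed

lemma poly_trunc: "degree (p::'a::comm_ring_1 poly) < K \<Longrightarrow> poly p x = (\<Sum>s<K. coeff p s * x^s)"
proof -
  assume d: "degree p < K"
  have "poly p x = (\<Sum>s\<le>degree p. coeff p s * x^s)" by (rule poly_altdef)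
  also have "\<dots> = (\<Sum>s<K. coeff p s * x^s)"
    by (rule sum.mono_neutral_left) (use d in \<open>auto simp: coeff_eq_0\<close>)
  finally show ?thesis .
qed

lemma reindex_sq: "(\<Sum>e<K*K. F (e mod K) (e div K)) = (\<Sum>s<K. \<Sum>t<(K::nat). F s t)"
proof -
  have "(\<Sum>e<K*K. F (e mod K) (e div K)) = (\<Sum>(s,t)\<in>{..<K}\<times>{..<K}. F s t)"
  proof (rule sum.reindex_bij_witness[where i = "\<lambda>(s,t). s + K*t" and j = "\<lambda>e. (e mod K, e div K)"])
    fix e assume "e \<in> {..<K*K}"
    then have e: "e < K*K" by simp
    show "(\<lambda>(s,t). s + K*t) (e mod K, e div K) = e" by simp
    have K0: "K > 0" using e by (cases K) auto
    have "e div K < K" using e by (simp add: div_less_iff_less_mult K0 mult.commute)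
    then show "(e mod K, e div K) \<in> {..<K}\<times>{..<K}" using K0 by simp
    show "(case (e mod K, e div K) of (s,t) \<Rightarrow> F s t) = F (e mod K) (e div K)" by simp
  next
    fix st assume "st \<in> {..<K}\<times>{..<K}"
    then obtain s t where st: "st = (s,t)" "s < K" "t < K" by auto
    show "(\<lambda>e. (e mod K, e div K)) ((\<lambda>(s,t). s + K*t) st) = st" using st by simp
    have "s + K*t < K * K" using idx_lt[OF st(3) st(2)] by (simp add: mult.commute)
    then show "(\<lambda>(s,t). s + K*t) st \<in> {..<K*K}" using st by simp
  qed
  also have "\<dots> = (\<Sum>s<K. \<Sum>t<K. F s t)" by (rule sum.cartesian_product[symmetric])
  finally show ?thesis .
qed


theorem lemma3p7:
  fixes D n m r :: nat
    and M N :: "nat \<Rightarrow> 'a::field poly mat"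
    and f g :: "nat \<Rightarrow> 'a poly"
    and \<omega> :: 'a
    and \<beta> :: "nat \<Rightarrow> 'a"
    and p :: "nat \<Rightarrow> 'a poly"
  assumes "D \<ge> 1" "n \<ge> 1" "m \<ge> 1" "r \<ge> 1"
    and M_dim: "\<And>i. i < D \<Longrightarrow> M i \<in> carrier_mat r r"
    and N_dim: "\<And>i. i < D \<Longrightarrow> N i \<in> carrier_mat r r"
    and M_deg: "\<And>i a b. i < D \<Longrightarrow> a < r \<Longrightarrow> b < r \<Longrightarrow> degree (M i $$ (a, b)) < n"
    and N_deg: "\<And>i a b. i < D \<Longrightarrow> a < r \<Longrightarrow> b < r \<Longrightarrow> degree (N i $$ (a, b)) < n"
    and f_deg: "\<And>i. i < D \<Longrightarrow> degree (f i) \<le> m"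
    and g_deg: "\<And>i. i < D \<Longrightarrow> degree (g i) \<le> m"
    and \<omega>_nz: "\<omega> \<noteq> 0"
    and \<omega>_ord: "\<And>k. 0 < k \<Longrightarrow> k < (D * n * m)^2 \<Longrightarrow> \<omega> ^ k \<noteq> 1"
    and \<beta>_dist: "inj_on \<beta> {..<r^2}"
    and p_deg: "\<And>l. l < r^2 \<Longrightarrow> degree (p l) < r^2"
    and p_interp: "\<And>l i. l < r^2 \<Longrightarrow> i < r^2 \<Longrightarrow> poly (p l) (\<beta> i) = (if i = l then 1 else 0)"
  shows "finite {\<alpha>. \<not> (mat_span r {prod_mats r D (\<lambda>i. eval_mat (M i) (poly (f i) x)) *
                                  prod_mats r D (\<lambda>i. eval_mat (N i) (poly (g i) y)) | x y. True}
              \<subseteq> mat_span r {prod_mats r D (\<lambda>i. eval_mat (M i)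
                                  (\<Sum>l<r^2. poly (f i) (\<omega>^l * \<alpha>) * poly (p l) z)) *
                               prod_mats r D (\<lambda>i. eval_mat (N i)
                                  (\<Sum>l<r^2. poly (g i) ((\<omega>^l * \<alpha>)^(D*n*m)) * poly (p l) z)) | z. True})}
       \<and> card {\<alpha>. \<not> (mat_span r {prod_mats r D (\<lambda>i. eval_mat (M i) (poly (f i) x)) *
                                  prod_mats r D (\<lambda>i. eval_mat (N i) (poly (g i) y)) | x y. True}
              \<subseteq> mat_span r {prod_mats r D (\<lambda>i. eval_mat (M i)
                                  (\<Sum>l<r^2. poly (f i) (\<omega>^l * \<alpha>) * poly (p l) z)) *
                               prod_mats r D (\<lambda>i. eval_mat (N i)
                                  (\<Sum>l<r^2. poly (g i) ((\<omega>^l * \<alpha>)^(D*n*m)) * poly (p l) z)) | z. True})}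
           < (D * n * m * r)^2"
    (is "finite ?B \<and> card ?B < _")
proof -
  define K where "K = D * n * m"
  define T where "T = K^2"
  have K1: "K \<ge> 1" unfolding K_def using assms(1-3) by simp
  have T1: "T \<ge> 1" unfolding T_def using K1 by simp
  define Mf where "Mf i = map_mat (\<lambda>q. q \<circ>\<^sub>p f i) (M i)" for i
  define Ng where "Ng i = map_mat (\<lambda>q. q \<circ>\<^sub>p g i) (N i)" for i
  define PM where "PM = prod_mats r D Mf"
  define PN where "PN = prod_mats r D Ng"
  have Mfc: "\<forall>i<D. Mf i \<in> carrier_mat r r" unfolding Mf_def using M_dim by auto
  have Ngc: "\<forall>i<D. Ng i \<in> carrier_mat r r" unfolding Ng_def using N_dim by auto
  have PMc: "PM \<in> carrier_mat r r" unfolding PM_def by (rule prod_mats_carrier[OF Mfc])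
  have PNc: "PN \<in> carrier_mat r r" unfolding PN_def by (rule prod_mats_carrier[OF Ngc])
  have evM: "prod_mats r D (\<lambda>i. eval_mat (M i) (poly (f i) x)) = map_mat (\<lambda>q. poly q x) PM" for x
  proof -
    have "map_mat (\<lambda>q. poly q x) PM = prod_mats r D (\<lambda>i. map_mat (\<lambda>q. poly q x) (Mf i))"
      unfolding PM_def by (rule prod_mats_eval[OF Mfc])
    also have "(\<lambda>i. map_mat (\<lambda>q. poly q x) (Mf i)) = (\<lambda>i. eval_mat (M i) (poly (f i) x))"
      unfolding Mf_def eval_mat_def by (auto intro!: eq_matI simp: poly_pcompose)
    finally show ?thesis by simp
  qed
  have evN: "prod_mats r D (\<lambda>i. eval_mat (N i) (poly (g i) x)) = map_mat (\<lambda>q. poly q x) PN" for x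
  proof -
    have "map_mat (\<lambda>q. poly q x) PN = prod_mats r D (\<lambda>i. map_mat (\<lambda>q. poly q x) (Ng i))"
      unfolding PN_def by (rule prod_mats_eval[OF Ngc])
    also have "(\<lambda>i. map_mat (\<lambda>q. poly q x) (Ng i)) = (\<lambda>i. eval_mat (N i) (poly (g i) x))"
      unfolding Ng_def eval_mat_def by (auto intro!: eq_matI simp: poly_pcompose)
    finally show ?thesis by simp
  qed
  have bnd: "D * ((n - 1) * m) < K"
  proof -
    have "D * ((n - 1) * m) + D * m = K" unfolding K_def using assms(2)
      by (cases n) (auto simp: algebra_simps)
    moreover have "D * m > 0" using assms(1,3) by simp
    ultimately show ?thesis by linarith
  qed
  have degMf: "\<forall>i<D. Mf i \<in> carrier_mat r r \<and> (\<forall>a<r. \<forall>b<r. degree (Mf i $$ (a,b)) \<le> (n - 1) * m)"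
  proof (intro allI impI conjI)
    fix i assume i: "i < D"
    show "Mf i \<in> carrier_mat r r" using Mfc i by auto
  next
    fix i a b assume i: "i < D" and a: "a < r" and b: "b < r"
    have "degree (Mf i $$ (a,b)) = degree (M i $$ (a,b)) * degree (f i)"
      unfolding Mf_def using M_dim[OF i] a b by (simp add: degree_pcompose)
    also have "\<dots> \<le> (n - 1) * m" using M_deg[OF i a b] f_deg[OF i] by (intro mult_mono) auto
    finally show "degree (Mf i $$ (a,b)) \<le> (n - 1) * m" .
  qed
  have degNg: "\<forall>i<D. Ng i \<in> carrier_mat r r \<and> (\<forall>a<r. \<forall>b<r. degree (Ng i $$ (a,b)) \<le> (n - 1) * m)"
  proof (intro allI impI conjI)
    fix i assume i: "i < D"
    show "Ng i \<in> carrier_mat r r" using Ngc i by auto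
  next
    fix i a b assume i: "i < D" and a: "a < r" and b: "b < r"
    have "degree (Ng i $$ (a,b)) = degree (N i $$ (a,b)) * degree (g i)"
      unfolding Ng_def using N_dim[OF i] a b by (simp add: degree_pcompose)
    also have "\<dots> \<le> (n - 1) * m" using N_deg[OF i a b] g_deg[OF i] by (intro mult_mono) auto
    finally show "degree (Ng i $$ (a,b)) \<le> (n - 1) * m" .
  qed
  have dPM: "degree (PM $$ (a,b)) < K" if "a < r" "b < r" for a b
    using prod_mats_deg[OF degMf] that bnd unfolding PM_def by (meson le_less_trans)
  have dPN: "degree (PN $$ (a,b)) < K" if "a < r" "b < r" for a b
    using prod_mats_deg[OF degNg] that bnd unfolding PN_def by (meson le_less_trans)

  define C where "C e = mat r r (\<lambda>(a,b). \<Sum>c<r. coeff (PM $$ (a,c)) (e mod K) * coeff (PN $$ (c,b)) (e div K))" for e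
  have Cc: "\<forall>e<T. C e \<in> carrier_mat r r" unfolding C_def by simp
  define L where "L x y = map_mat (\<lambda>q. poly q x) PM * map_mat (\<lambda>q. poly q y) PN" for x y
  have Lid: "L x y = lc r (\<lambda>e. x^(e mod K) * y^(e div K)) C {..<T}" for x y
  proof (rule eq_matI)
    fix a b assume ab: "a < dim_row (lc r (\<lambda>e. x^(e mod K) * y^(e div K)) C {..<T})"
      "b < dim_col (lc r (\<lambda>e. x^(e mod K) * y^(e div K)) C {..<T})"
    then have a: "a < r" and b: "b < r" by (auto simp: lc_def)
    have "L x y $$ (a,b) = (\<Sum>c\<in>{0..<r}. poly (PM $$ (a,c)) x * poly (PN $$ (c,b)) y)"
      unfolding L_def using a b PMc PNc by (simp add: scalar_prod_def)
    also have "\<dots> = (\<Sum>c<r. (\<Sum>s<K. coeff (PM $$ (a,c)) s * x^s) * (\<Sum>t<K. coeff (PN $$ (c,b)) t * y^t))"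
    proof (rule sum.cong)
      fix c assume "c \<in> {..<r}"
      then have c: "c < r" by simp
      show "poly (PM $$ (a,c)) x * poly (PN $$ (c,b)) y = (\<Sum>s<K. coeff (PM $$ (a,c)) s * x^s) * (\<Sum>t<K. coeff (PN $$ (c,b)) t * y^t)"
        using poly_trunc[OF dPM[OF a c], of x] poly_trunc[OF dPN[OF c b], of y] by simp
    qed (simp add: atLeast0LessThan)
    also have "\<dots> = (\<Sum>c<r. \<Sum>s<K. \<Sum>t<K. (coeff (PM $$ (a,c)) s * x^s) * (coeff (PN $$ (c,b)) t * y^t))"
      by (simp add: sum_product)
    also have "\<dots> = (\<Sum>s<K. \<Sum>c<r. \<Sum>t<K. (coeff (PM $$ (a,c)) s * x^s) * (coeff (PN $$ (c,b)) t * y^t))"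
      by (rule sum.swap)
    also have "\<dots> = (\<Sum>s<K. \<Sum>t<K. \<Sum>c<r. (coeff (PM $$ (a,c)) s * x^s) * (coeff (PN $$ (c,b)) t * y^t))"
      by (rule sum.cong[OF refl], rule sum.swap)
    also have "\<dots> = (\<Sum>s<K. \<Sum>t<K. x^s * y^t * (\<Sum>c<r. coeff (PM $$ (a,c)) s * coeff (PN $$ (c,b)) t))"
      by (simp add: sum_distrib_left algebra_simps)
    also have "\<dots> = (\<Sum>e<K*K. x^(e mod K) * y^(e div K) * (\<Sum>c<r. coeff (PM $$ (a,c)) (e mod K) * coeff (PN $$ (c,b)) (e div K)))"
      by (rule reindex_sq[symmetric])
    also have "\<dots> = lc r (\<lambda>e. x^(e mod K) * y^(e div K)) C {..<T} $$ (a,b)"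
      unfolding lc_def C_def T_def using a b by (simp add: power2_eq_square)
    finally show "L x y $$ (a,b) = lc r (\<lambda>e. x^(e mod K) * y^(e div K)) C {..<T} $$ (a,b)" .
  qed (simp_all add: L_def lc_def, use PMc PNc in auto)
  have Qid: "L u (u^K) = lc r (\<lambda>e. u^e) C {..<T}" for u
  proof -
    have "(\<lambda>e. u^(e mod K) * (u^K)^(e div K)) = (\<lambda>e. u^e)"
    proof
      fix e
      have "u^(e mod K) * (u^K)^(e div K) = u^(e mod K + K * (e div K))"
        by (simp only: power_add power_mult)
      also have "e mod K + K * (e div K) = e" by (rule mod_mult_div_eq)
      finally show "u^(e mod K) * (u^K)^(e div K) = u^e" .
    qed
    then show ?thesis using Lid[of u "u^K"] by simp
  qed

  have ord': "\<forall>k. 0<k \<longrightarrow> k<T \<longrightarrow> \<omega>^k \<noteq> 1" using \<omega>_ord unfolding T_def K_def by auto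
  obtain P where P: "P \<noteq> 0" "degree P < r^2 * T"
    and Pgood: "\<And>\<alpha>. poly P \<alpha> \<noteq> 0 \<Longrightarrow> \<forall>e<T. C e \<in> mat_span r ((\<lambda>l. lc r (\<lambda>e. (\<omega>^l*\<alpha>)^e) C {..<T}) ` {..<r^2})"
    using core[OF Cc T1 assms(4) \<omega>_nz ord'] by blast

  have good: "mat_span r {prod_mats r D (\<lambda>i. eval_mat (M i) (poly (f i) x)) *
                                  prod_mats r D (\<lambda>i. eval_mat (N i) (poly (g i) y)) | x y. True}
              \<subseteq> mat_span r {prod_mats r D (\<lambda>i. eval_mat (M i)
                                  (\<Sum>l<r^2. poly (f i) (\<omega>^l * \<alpha>) * poly (p l) z)) *
                               prod_mats r D (\<lambda>i. eval_mat (N i)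
                                  (\<Sum>l<r^2. poly (g i) ((\<omega>^l * \<alpha>)^(D*n*m)) * poly (p l) z)) | z. True}"
    if Pa: "poly P \<alpha> \<noteq> 0" for \<alpha>
  proof -
    define RS where "RS = {prod_mats r D (\<lambda>i. eval_mat (M i)
                                  (\<Sum>l<r^2. poly (f i) (\<omega>^l * \<alpha>) * poly (p l) z)) *
                               prod_mats r D (\<lambda>i. eval_mat (N i)
                                  (\<Sum>l<r^2. poly (g i) ((\<omega>^l * \<alpha>)^(D*n*m)) * poly (p l) z)) | z. True}"
    have RSc: "RS \<subseteq> carrier_mat r r"
    proof
      fix A assume "A \<in> RS"
      then obtain z where "A = prod_mats r D (\<lambda>i. eval_mat (M i)
                                  (\<Sum>l<r^2. poly (f i) (\<omega>^l * \<alpha>) * poly (p l) z)) *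
                               prod_mats r D (\<lambda>i. eval_mat (N i)
                                  (\<Sum>l<r^2. poly (g i) ((\<omega>^l * \<alpha>)^(D*n*m)) * poly (p l) z))"
        unfolding RS_def by auto
      moreover have "prod_mats r D (\<lambda>i. eval_mat (M i)
                                  (\<Sum>l<r^2. poly (f i) (\<omega>^l * \<alpha>) * poly (p l) z)) \<in> carrier_mat r r"
        by (rule prod_mats_carrier) (use M_dim in \<open>auto simp: eval_mat_def\<close>)
      moreover have "prod_mats r D (\<lambda>i. eval_mat (N i)
                                  (\<Sum>l<r^2. poly (g i) ((\<omega>^l * \<alpha>)^(D*n*m)) * poly (p l) z)) \<in> carrier_mat r r"
        by (rule prod_mats_carrier) (use N_dim in \<open>auto simp: eval_mat_def\<close>)
      ultimately show "A \<in> carrier_mat r r" by simp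
    qed
    have Qin: "lc r (\<lambda>e. (\<omega>^l*\<alpha>)^e) C {..<T} \<in> RS" if l: "l < r^2" for l
    proof -
      have sf: "(\<Sum>l'<r^2. poly (f i) (\<omega>^l' * \<alpha>) * poly (p l') (\<beta> l)) = poly (f i) (\<omega>^l * \<alpha>)" for i
      proof -
        have "(\<Sum>l'<r^2. poly (f i) (\<omega>^l' * \<alpha>) * poly (p l') (\<beta> l)) = (\<Sum>l'<r^2. if l' = l then poly (f i) (\<omega>^l' * \<alpha>) else 0)"
          by (rule sum.cong[OF refl]) (use p_interp l in auto)
        also have "\<dots> = poly (f i) (\<omega>^l * \<alpha>)" using l by simp
        finally show ?thesis .
      qed
      have sg: "(\<Sum>l'<r^2. poly (g i) ((\<omega>^l' * \<alpha>)^(D*n*m)) * poly (p l') (\<beta> l)) = poly (g i) ((\<omega>^l * \<alpha>)^K)" for i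
      proof -
        have "(\<Sum>l'<r^2. poly (g i) ((\<omega>^l' * \<alpha>)^(D*n*m)) * poly (p l') (\<beta> l)) = (\<Sum>l'<r^2. if l' = l then poly (g i) ((\<omega>^l' * \<alpha>)^(D*n*m)) else 0)"
          by (rule sum.cong[OF refl]) (use p_interp l in auto)
        also have "\<dots> = poly (g i) ((\<omega>^l * \<alpha>)^K)" using l unfolding K_def by simp
        finally show ?thesis .
      qed
      have "prod_mats r D (\<lambda>i. eval_mat (M i)
                                  (\<Sum>l'<r^2. poly (f i) (\<omega>^l' * \<alpha>) * poly (p l') (\<beta> l))) *
                               prod_mats r D (\<lambda>i. eval_mat (N i)
                                  (\<Sum>l'<r^2. poly (g i) ((\<omega>^l' * \<alpha>)^(D*n*m)) * poly (p l') (\<beta> l)))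
            = L (\<omega>^l * \<alpha>) ((\<omega>^l * \<alpha>)^K)"
        unfolding sf sg L_def evM evN by simp
      also have "\<dots> = lc r (\<lambda>e. (\<omega>^l*\<alpha>)^e) C {..<T}" by (rule Qid)
      finally have calc: "prod_mats r D (\<lambda>i. eval_mat (M i)
                                  (\<Sum>l'<r^2. poly (f i) (\<omega>^l' * \<alpha>) * poly (p l') (\<beta> l))) *
                               prod_mats r D (\<lambda>i. eval_mat (N i)
                                  (\<Sum>l'<r^2. poly (g i) ((\<omega>^l' * \<alpha>)^(D*n*m)) * poly (p l') (\<beta> l)))
            = lc r (\<lambda>e. (\<omega>^l*\<alpha>)^e) C {..<T}" .
      show ?thesis unfolding RS_def
        by (intro CollectI exI[of _ "\<beta> l"] conjI TrueI) (rule calc[symmetric])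
    qed
    have Cin: "\<forall>e<T. C e \<in> mat_span r RS"
    proof (intro allI impI)
      fix e assume "e < T"
      then have "C e \<in> mat_span r ((\<lambda>l. lc r (\<lambda>e. (\<omega>^l*\<alpha>)^e) C {..<T}) ` {..<r^2})" using Pgood[OF Pa] by auto
      also have "\<dots> \<subseteq> mat_span r RS" by (rule mat_span_mono) (use Qin in auto)
      finally show "C e \<in> mat_span r RS" .
    qed
    have "{prod_mats r D (\<lambda>i. eval_mat (M i) (poly (f i) x)) *
                                  prod_mats r D (\<lambda>i. eval_mat (N i) (poly (g i) y)) | x y. True} \<subseteq> mat_span r RS"
    proof
      fix A assume "A \<in> {prod_mats r D (\<lambda>i. eval_mat (M i) (poly (f i) x)) *
                                  prod_mats r D (\<lambda>i. eval_mat (N i) (poly (g i) y)) | x y. True}"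
      then obtain x y where "A = prod_mats r D (\<lambda>i. eval_mat (M i) (poly (f i) x)) *
                                  prod_mats r D (\<lambda>i. eval_mat (N i) (poly (g i) y))" by auto
      then have "A = L x y" unfolding L_def evM evN by simp
      also have "\<dots> = lc r (\<lambda>e. x^(e mod K) * y^(e div K)) C {..<T}" by (rule Lid)
      also have "\<dots> \<in> mat_span r RS" by (rule lc_in_span[OF RSc]) (use Cin in auto)
      finally show "A \<in> mat_span r RS" .
    qed
    from mat_span_trans[OF RSc this] show ?thesis unfolding RS_def .
  qed
  have sub: "?B \<subseteq> {\<alpha>. poly P \<alpha> = 0}" using good by blast
  have fin: "finite ?B" using finite_subset[OF sub poly_roots_finite[OF P(1)]] .
  have "card ?B \<le> card {\<alpha>. poly P \<alpha> = 0}" by (rule card_mono[OF poly_roots_finite[OF P(1)] sub])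
  also have "\<dots> \<le> degree P" by (rule card_poly_roots_bound[OF P(1)])
  also have "\<dots> < r^2 * T" by (rule P(2))
  also have "r^2 * T = (D * n * m * r)^2" unfolding T_def K_def by (simp add: power_mult_distrib)
  finally show ?thesis using fin by simp
qed

end
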